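(* Let $f_1,\dots,f_n\colon\mathbb R\to\mathbb R$ and $\eta\colon\mathbb R\times\mathbb R\to(0,\infty)$ be smooth with $\eta(x,0)=1$, and consider the metric $(\star)$ on $\mathbb R^{n+2}$, whose scalar curvature is $-2\eta_{uu}/\eta$. If $\mathrm{Scal}\le-2$ everywhere and $|\eta_u(x,0)|\le1$ for all $x$, then the metric is complete.
   Context: The metric $(\star)$: on $\mathbb R\times\mathbb R^{n+1}$ with coordinates $(x,u,v_1,\dots,v_n)$, conventions $v_0=u$, $v_{-1}=v_{n+1}=0$, $f_0=f_{n+1}=0$, $g_{\eta,f}=\eta(x,u)^2dx^2+\sum_{j=0}^n\big(dv_j+(v_{j-1}f_j(x)-v_{j+1}f_{j+1}(x))dx\big)^2$. $|\eta_u(x,0)|$ is the absolute geodesic curvature of $\gamma(x)=(x,0,\dots,0)$. *)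

theory Defs
  imports "HOL-Analysis.Analysis"
begin

definition smooth1 :: "(real \<Rightarrow> real) \<Rightarrow> bool" where
  "smooth1 f \<longleftrightarrow> (\<forall>k x. ((deriv ^^ k) f) differentiable (at x))"

definition pdx :: "(real \<Rightarrow> real \<Rightarrow> real) \<Rightarrow> real \<Rightarrow> real \<Rightarrow> real" where
  "pdx g = (\<lambda>x u. deriv (\<lambda>t. g t u) x)"

definition pdu :: "(real \<Rightarrow> real \<Rightarrow> real) \<Rightarrow> real \<Rightarrow> real \<Rightarrow> real" where
  "pdu g = (\<lambda>x u. deriv (\<lambda>t. g x t) u)"

text \<open>Iterated partial derivative along a list of directions (True = x, False = u).\<close>
definition iter_pd :: "bool list \<Rightarrow> (real \<Rightarrow> real \<Rightarrow> real) \<Rightarrow> real \<Rightarrow> real \<Rightarrow> real" where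
  "iter_pd ds g = foldr (\<lambda>d h. if d then pdx h else pdu h) ds g"

definition smooth2 :: "(real \<Rightarrow> real \<Rightarrow> real) \<Rightarrow> bool" where
  "smooth2 g \<longleftrightarrow> (\<forall>ds. continuous_on UNIV (\<lambda>p. iter_pd ds g (fst p) (snd p)) \<and>
      (\<forall>x u. (\<lambda>t. iter_pd ds g t u) differentiable (at x) \<and>
             (\<lambda>t. iter_pd ds g x t) differentiable (at u)))"

text \<open>Points of R x R^(n+1) are pairs (x, v) with v j the coordinate v_j for j = 0..n
  (v_0 = u); coordinates v j with j > n are ignored.  The functions f_1..f_n are given by
  f j for 1 \<le> j \<le> n; fext extends by f_0 = f_(n+1) = 0.\<close>
definition fext :: "nat \<Rightarrow> (nat \<Rightarrow> real \<Rightarrow> real) \<Rightarrow> nat \<Rightarrow> real \<Rightarrow> real" where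
  "fext n f j = (if 1 \<le> j \<and> j \<le> n then f j else (\<lambda>_. 0))"

text \<open>Squared g-norm of the tangent vector (dx, dv) at the point (x, v).
  The conventions v_(-1) = v_(n+1) = 0 are harmless since they are multiplied by
  f_0 = f_(n+1) = 0.\<close>
definition gsq :: "nat \<Rightarrow> (real \<Rightarrow> real \<Rightarrow> real) \<Rightarrow> (nat \<Rightarrow> real \<Rightarrow> real)
    \<Rightarrow> real \<Rightarrow> (nat \<Rightarrow> real) \<Rightarrow> real \<Rightarrow> (nat \<Rightarrow> real) \<Rightarrow> real" where
  "gsq n \<eta> f x v dx dv =
     (\<eta> x (v 0))\<^sup>2 * dx\<^sup>2 +
     (\<Sum>j\<le>n. (dv j + (v (j - 1) * fext n f j x - v (j + 1) * fext n f (j + 1) x) * dx)\<^sup>2)"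

definition adm_curve :: "nat \<Rightarrow> (real \<Rightarrow> real) \<Rightarrow> (nat \<Rightarrow> real \<Rightarrow> real) \<Rightarrow> bool" where
  "adm_curve n X V \<longleftrightarrow> X C1_differentiable_on {0..1} \<and> (\<forall>j\<le>n. V j C1_differentiable_on {0..1})"

definition curve_length :: "nat \<Rightarrow> (real \<Rightarrow> real \<Rightarrow> real) \<Rightarrow> (nat \<Rightarrow> real \<Rightarrow> real)
    \<Rightarrow> (real \<Rightarrow> real) \<Rightarrow> (nat \<Rightarrow> real \<Rightarrow> real) \<Rightarrow> real" where
  "curve_length n \<eta> f X V =
     integral {0..1} (\<lambda>t. sqrt (gsq n \<eta> f (X t) (\<lambda>j. V j t)
        (vector_derivative X (at t)) (\<lambda>j. vector_derivative (V j) (at t))))"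

definition rdist :: "nat \<Rightarrow> (real \<Rightarrow> real \<Rightarrow> real) \<Rightarrow> (nat \<Rightarrow> real \<Rightarrow> real)
    \<Rightarrow> real \<times> (nat \<Rightarrow> real) \<Rightarrow> real \<times> (nat \<Rightarrow> real) \<Rightarrow> real" where
  "rdist n \<eta> f p q = Inf {curve_length n \<eta> f X V | X V. adm_curve n X V \<and>
      X 0 = fst p \<and> X 1 = fst q \<and> (\<forall>j\<le>n. V j 0 = snd p j \<and> V j 1 = snd q j)}"

definition metric_complete :: "nat \<Rightarrow> (real \<Rightarrow> real \<Rightarrow> real) \<Rightarrow> (nat \<Rightarrow> real \<Rightarrow> real) \<Rightarrow> bool" where
  "metric_complete n \<eta> f \<longleftrightarrow>
     (\<forall>P :: nat \<Rightarrow> real \<times> (nat \<Rightarrow> real).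
        (\<forall>e>0. \<exists>N. \<forall>m\<ge>N. \<forall>k\<ge>N. rdist n \<eta> f (P m) (P k) < e) \<longrightarrow>
        (\<exists>q. (\<lambda>k. rdist n \<eta> f (P k) q) \<longlonglongrightarrow> 0))"

definition scal :: "(real \<Rightarrow> real \<Rightarrow> real) \<Rightarrow> real \<Rightarrow> real \<Rightarrow> real" where
  "scal \<eta> x u = - 2 * pdu (pdu \<eta>) x u / \<eta> x u"

end

theory Submission
  imports Defs
begin



lemma eta_lower:
  fixes \<eta> :: "real \<Rightarrow> real \<Rightarrow> real"
  assumes eta_smooth: "smooth2 \<eta>"
    and eta_pos: "\<And>x u. \<eta> x u > 0"
    and eta_axis: "\<And>x. \<eta> x 0 = 1"
    and scal_le: "\<And>x u. scal \<eta> x u \<le> -2"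
    and curv: "\<And>x. \<bar>pdu \<eta> x 0\<bar> \<le> 1"
  shows "\<eta> x u \<ge> exp (- \<bar>u\<bar>)"
proof -
  define \<phi> where "\<phi> = \<eta> x"
  define \<phi>1 where "\<phi>1 = pdu \<eta> x"
  define \<phi>2 where "\<phi>2 = pdu (pdu \<eta>) x"
  have d1: "(\<phi> has_real_derivative \<phi>1 t) (at t)" for t
  proof -
    have "(\<lambda>s. iter_pd [] \<eta> x s) differentiable (at t)"
      using eta_smooth unfolding smooth2_def by blast
    hence "(\<phi> differentiable (at t))" by (simp add: iter_pd_def \<phi>_def)
    moreover have "\<phi>1 t = deriv \<phi> t" by (simp add: \<phi>1_def pdu_def \<phi>_def)
    ultimately show ?thesis using DERIV_deriv_iff_real_differentiable by metis
  qed
  have d2: "(\<phi>1 has_real_derivative \<phi>2 t) (at t)" for t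
  proof -
    have "(\<lambda>s. iter_pd [False] \<eta> x s) differentiable (at t)"
      using eta_smooth unfolding smooth2_def by blast
    hence "(\<phi>1 differentiable (at t))" by (simp add: iter_pd_def \<phi>1_def)
    moreover have "\<phi>2 t = deriv \<phi>1 t" by (simp add: \<phi>1_def pdu_def \<phi>2_def)
    ultimately show ?thesis using DERIV_deriv_iff_real_differentiable by metis
  qed
  have ineq: "\<phi>2 t \<ge> \<phi> t" for t
  proof -
    have p: "\<phi> t > 0" using eta_pos \<phi>_def by simp
    have "- 2 * \<phi>2 t / \<phi> t \<le> -2" using scal_le[of x t] by (simp add: scal_def \<phi>_def \<phi>2_def)
    with p show ?thesis by (simp add: field_simps)
  qed
  have p0: "\<phi> 0 = 1" "\<bar>\<phi>1 0\<bar> \<le> 1" using eta_axis curv by (auto simp: \<phi>_def \<phi>1_def)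
  show ?thesis
  proof (cases "u \<ge> 0")
    case True
    have A: "\<phi>1 s + \<phi> s \<ge> 0" if "s \<ge> 0" for s
    proof -
      have "exp (-0) * (\<phi>1 0 + \<phi> 0) \<le> exp (-s) * (\<phi>1 s + \<phi> s)"
      proof (rule DERIV_nonneg_imp_nondecreasing[where f="\<lambda>s. exp (-s) * (\<phi>1 s + \<phi> s)"])
        show "0 \<le> s" by fact
        fix y assume "0 \<le> y" "y \<le> s"
        have "((\<lambda>s. exp (-s) * (\<phi>1 s + \<phi> s)) has_real_derivative
            (exp (-y) * (-1) * (\<phi>1 y + \<phi> y) + exp (-y) * (\<phi>2 y + \<phi>1 y))) (at y)"
          by (auto intro!: derivative_eq_intros d1 d2)
        moreover have "exp (-y) * (-1) * (\<phi>1 y + \<phi> y) + exp (-y) * (\<phi>2 y + \<phi>1 y) \<ge> 0"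
        proof -
          have "exp (-y) * (-1) * (\<phi>1 y + \<phi> y) + exp (-y) * (\<phi>2 y + \<phi>1 y) = exp (-y) * (\<phi>2 y - \<phi> y)" by (simp add: algebra_simps)
          thus ?thesis using ineq[of y] by simp
        qed
        ultimately show "\<exists>z. ((\<lambda>s. exp (-s) * (\<phi>1 s + \<phi> s)) has_real_derivative z) (at y) \<and> z \<ge> 0" by blast
      qed
      moreover have "\<phi>1 0 + \<phi> 0 \<ge> 0" using p0 by auto
      ultimately have "exp (-s) * (\<phi>1 s + \<phi> s) \<ge> 0" by simp
      thus ?thesis by (simp add: zero_le_mult_iff)
    qed
    have "exp 0 * \<phi> 0 \<le> exp u * \<phi> u"
    proof (rule DERIV_nonneg_imp_nondecreasing[where f="\<lambda>s. exp s * \<phi> s"])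
      show "0 \<le> u" by fact
      fix y assume "0 \<le> y" "y \<le> u"
      have "((\<lambda>s. exp s * \<phi> s) has_real_derivative (exp y * \<phi> y + exp y * \<phi>1 y)) (at y)"
        by (auto intro!: derivative_eq_intros d1)
      moreover have "exp y * \<phi> y + exp y * \<phi>1 y \<ge> 0"
      proof -
        have "exp y * \<phi> y + exp y * \<phi>1 y = exp y * (\<phi>1 y + \<phi> y)" by (simp add: algebra_simps)
        thus ?thesis using A[of y] \<open>0 \<le> y\<close> by simp
      qed
      ultimately show "\<exists>z. ((\<lambda>s. exp s * \<phi> s) has_real_derivative z) (at y) \<and> z \<ge> 0" by blast
    qed
    hence "1 \<le> exp u * \<eta> x u" using p0 by (simp add: \<phi>_def)
    hence "exp (-u) \<le> \<eta> x u" by (simp add: exp_minus field_simps)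
    thus ?thesis using True by simp
  next
    case False
    have A: "\<phi> s - \<phi>1 s \<ge> 0" if "s \<le> 0" for s
    proof -
      have "exp 0 * (\<phi> 0 - \<phi>1 0) \<le> exp s * (\<phi> s - \<phi>1 s)"
      proof (rule DERIV_nonpos_imp_nonincreasing[where f="\<lambda>s. exp s * (\<phi> s - \<phi>1 s)"])
        show "s \<le> 0" by fact
        fix y assume "s \<le> y" "y \<le> 0"
        have "((\<lambda>s. exp s * (\<phi> s - \<phi>1 s)) has_real_derivative
            (exp y * (\<phi> y - \<phi>1 y) + exp y * (\<phi>1 y - \<phi>2 y))) (at y)"
          by (auto intro!: derivative_eq_intros d1 d2)
        moreover have "exp y * (\<phi> y - \<phi>1 y) + exp y * (\<phi>1 y - \<phi>2 y) \<le> 0"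
        proof -
          have "exp y * (\<phi> y - \<phi>1 y) + exp y * (\<phi>1 y - \<phi>2 y) = exp y * (\<phi> y - \<phi>2 y)" by (simp add: algebra_simps)
          thus ?thesis using ineq[of y] by (simp add: mult_le_0_iff)
        qed
        ultimately show "\<exists>z. ((\<lambda>s. exp s * (\<phi> s - \<phi>1 s)) has_real_derivative z) (at y) \<and> z \<le> 0" by blast
      qed
      moreover have "\<phi> 0 - \<phi>1 0 \<ge> 0" using p0 by auto
      ultimately have "exp s * (\<phi> s - \<phi>1 s) \<ge> 0" by simp
      thus ?thesis by (simp add: zero_le_mult_iff)
    qed
    have "exp (-u) * \<phi> u \<ge> exp (-0) * \<phi> 0"
    proof (rule DERIV_nonpos_imp_nonincreasing[where f="\<lambda>s. exp (-s) * \<phi> s"])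
      show "u \<le> 0" using False by simp
      fix y assume "u \<le> y" "y \<le> 0"
      have "((\<lambda>s. exp (-s) * \<phi> s) has_real_derivative (exp (-y) * (-1) * \<phi> y + exp (-y) * \<phi>1 y)) (at y)"
        by (auto intro!: derivative_eq_intros d1)
      moreover have "exp (-y) * (-1) * \<phi> y + exp (-y) * \<phi>1 y \<le> 0"
      proof -
        have "exp (-y) * (-1) * \<phi> y + exp (-y) * \<phi>1 y = - (exp (-y) * (\<phi> y - \<phi>1 y))" by (simp add: algebra_simps)
        thus ?thesis using A[of y] \<open>y \<le> 0\<close> by simp
      qed
      ultimately show "\<exists>z. ((\<lambda>s. exp (-s) * \<phi> s) has_real_derivative z) (at y) \<and> z \<le> 0" by blast
    qed
    hence "1 \<le> exp (-u) * \<eta> x u" using p0 by (simp add: \<phi>_def)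
    hence "exp u \<le> \<eta> x u" by (simp add: exp_minus field_simps)
    thus ?thesis using False by simp
  qed
qed




lemma int_bound:
  fixes h h' G :: "real \<Rightarrow> real"
  assumes d: "\<And>t. t \<in> {0..1} \<Longrightarrow> (h has_real_derivative h' t) (at t)"
    and le: "\<And>t. t \<in> {0..1} \<Longrightarrow> \<bar>h' t\<bar> \<le> c * G t"
    and int: "G integrable_on {0..1}"
    and nn: "\<And>t. t \<in> {0..1} \<Longrightarrow> 0 \<le> G t"
    and c: "c \<ge> 0" and s: "s \<in> {0..1}"
  shows "\<bar>h s - h 0\<bar> \<le> c * integral {0..1} G"
proof -
  have sub: "{0..s} \<subseteq> {0..1}" using s by auto
  have ftc: "(h' has_integral (h s - h 0)) {0..s}"
    apply (rule fundamental_theorem_of_calculus)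
    using s apply simp
  proof -
    fix t assume "t \<in> {0..s}"
    hence "t \<in> {0..1}" using sub by blast
    from d[OF this] have "(h has_vector_derivative h' t) (at t)"
      by (simp add: has_real_derivative_iff_has_vector_derivative)
    thus "(h has_vector_derivative h' t) (at t within {0..s})" by (rule has_vector_derivative_at_within)
  qed
  have int1: "(\<lambda>t. c * G t) integrable_on {0..1}" using int by (rule integrable_on_mult_right)
  have ints: "(\<lambda>t. c * G t) integrable_on {0..s}" using int1 integrable_on_subinterval sub by blast
  have ints': "(\<lambda>t. - (c * G t)) integrable_on {0..s}" using ints by (simp add: integrable_neg)
  have "h s - h 0 \<le> integral {0..s} (\<lambda>t. c * G t)"
    by (rule has_integral_le[OF ftc integrable_integral[OF ints]]) (use le sub in \<open>auto simp: abs_le_iff\<close>)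
  moreover have "integral {0..s} (\<lambda>t. - (c * G t)) \<le> h s - h 0"
    by (rule has_integral_le[OF integrable_integral[OF ints'] ftc]) (use le sub in \<open>fastforce simp: abs_le_iff\<close>)
  moreover have "integral {0..s} (\<lambda>t. c * G t) \<le> integral {0..1} (\<lambda>t. c * G t)"
    by (rule integral_subset_le[OF sub ints int1]) (use nn c in auto)
  ultimately show ?thesis using c by (auto simp: abs_le_iff integral_neg)
qed

lemma integral_nonneg':
  fixes f :: "real \<Rightarrow> real"
  assumes "\<And>x. x \<in> S \<Longrightarrow> 0 \<le> f x"
  shows "0 \<le> integral S f"
proof (cases "f integrable_on S")
  case True thus ?thesis using assms integral_nonneg by blast
next
  case False thus ?thesis by (simp add: not_integrable_integral)
qed

lemma integral_le_const:
  fixes f :: "real \<Rightarrow> real"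
  assumes "\<And>x. x \<in> {0..1} \<Longrightarrow> f x \<le> K" "K \<ge> 0"
  shows "integral {0..1} f \<le> K"
proof (cases "f integrable_on {0..1}")
  case True
  have c: "(\<lambda>_. K) integrable_on {0..1::real}" by (rule Henstock_Kurzweil_Integration.integrable_const_ivl)
  have "integral {0..1} f \<le> integral {0..1} (\<lambda>_::real. K)"
    by (rule Henstock_Kurzweil_Integration.integral_le[OF True c]) (use assms in auto)
  thus ?thesis by simp
next
  case False thus ?thesis using assms(2) by (simp add: not_integrable_integral)
qed

lemma skew:
  fixes v :: "nat \<Rightarrow> real"
  shows "(\<Sum>j\<le>n. v j * (v (j - 1) * fext n f j x - v (j + 1) * fext n f (j + 1) x)) = 0"
proof -
  define b where "b j = v (j - 1) * v j * fext n f j x" for j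
  have "(\<Sum>j\<le>n. v j * (v (j - 1) * fext n f j x - v (j + 1) * fext n f (j + 1) x))
      = (\<Sum>j\<le>n. b j - b (Suc j))"
    by (rule sum.cong) (auto simp: b_def algebra_simps)
  also have "\<dots> = b 0 - b (Suc n)" by (rule sum_telescope)
  also have "\<dots> = 0" by (simp add: b_def fext_def)
  finally show ?thesis .
qed




lemma C1_facts:
  fixes g :: "real \<Rightarrow> real"
  assumes "g C1_differentiable_on {0..1}"
  shows "continuous_on {0..1} g"
    and "continuous_on {0..1} (\<lambda>t. vector_derivative g (at t))"
    and "\<And>t. t \<in> {0..1} \<Longrightarrow> (g has_real_derivative vector_derivative g (at t)) (at t)"
proof -
  have d: "\<forall>t\<in>{0..1}. g differentiable at t" and c: "continuous_on {0..1} (\<lambda>t. vector_derivative g (at t))"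
    using assms by (auto simp: C1_differentiable_on_eq)
  show "continuous_on {0..1} g"
    by (rule differentiable_imp_continuous_on, rule differentiable_at_imp_differentiable_on) (use d in auto)
  show "continuous_on {0..1} (\<lambda>t. vector_derivative g (at t))" by (fact c)
  fix t :: real assume "t \<in> {0..1}"
  hence "g differentiable at t" using d by auto
  thus "(g has_real_derivative vector_derivative g (at t)) (at t)"
    by (simp add: has_real_derivative_iff_has_vector_derivative vector_derivative_works[symmetric])
qed

lemma curve_bound:
  fixes X :: "real \<Rightarrow> real" and V :: "nat \<Rightarrow> real \<Rightarrow> real" and \<eta> :: "real \<Rightarrow> real \<Rightarrow> real"
  assumes eta_low: "\<And>x u. \<eta> x u \<ge> exp (- \<bar>u\<bar>)"
    and eta_cont: "continuous_on UNIV (\<lambda>p. \<eta> (fst p) (snd p))"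
    and f_cont: "\<And>j. 1 \<le> j \<Longrightarrow> j \<le> n \<Longrightarrow> continuous_on UNIV (f j)"
    and adm: "adm_curve n X V"
    and X0: "\<bar>X 0\<bar> \<le> R" and V0: "\<And>j. j \<le> n \<Longrightarrow> \<bar>V j 0\<bar> \<le> R"
    and L1: "curve_length n \<eta> f X V \<le> 1"
    and B_def: "B = sqrt ((real n + 1) * R\<^sup>2 + 1) + 1"
    and M0: "M \<ge> 0" and M: "\<And>j x. \<bar>x\<bar> \<le> R + exp B \<Longrightarrow> \<bar>fext n f j x\<bar> \<le> M"
  shows "\<bar>X 1 - X 0\<bar> \<le> exp B * curve_length n \<eta> f X V"
    and "\<And>j. j \<le> n \<Longrightarrow> \<bar>V j 1 - V j 0\<bar> \<le> (1 + 2 * B * M * exp B) * curve_length n \<eta> f X V"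
proof -
  define DX where "DX t = vector_derivative X (at t)" for t
  define DV where "DV j t = vector_derivative (V j) (at t)" for j t
  have XC1: "X C1_differentiable_on {0..1}" and VC1: "\<And>j. j \<le> n \<Longrightarrow> V j C1_differentiable_on {0..1}"
    using adm by (auto simp: adm_curve_def)
  have cX: "continuous_on {0..1} X" and cDX: "continuous_on {0..1} DX"
    and dX: "\<And>t. t \<in> {0..1} \<Longrightarrow> (X has_real_derivative DX t) (at t)"
    using C1_facts[OF XC1] by (auto simp: DX_def[abs_def])
  have cV: "\<And>j. j \<le> n \<Longrightarrow> continuous_on {0..1} (V j)"
    and cDV: "\<And>j. j \<le> n \<Longrightarrow> continuous_on {0..1} (DV j)"
    and dV: "\<And>j t. j \<le> n \<Longrightarrow> t \<in> {0..1} \<Longrightarrow> (V j has_real_derivative DV j t) (at t)"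
    using C1_facts[OF VC1] by (auto simp: DV_def[abs_def])
  define Wj where "Wj j t = DV j t + (V (j - 1) t * fext n f j (X t) - V (j + 1) t * fext n f (j + 1) (X t)) * DX t" for j t
  define E where "E t = \<eta> (X t) (V 0 t)" for t
  define G where "G t = sqrt ((E t)\<^sup>2 * (DX t)\<^sup>2 + (\<Sum>j\<le>n. (Wj j t)\<^sup>2))" for t
  have L_eq: "curve_length n \<eta> f X V = integral {0..1} G"
    unfolding curve_length_def G_def gsq_def Wj_def DX_def DV_def E_def by simp
  define L where "L = integral {0..1} G"
  have cfx: "continuous_on {0..1} (\<lambda>t. fext n f j (X t))" for j
  proof (cases "1 \<le> j \<and> j \<le> n")
    case True
    then show ?thesis using continuous_on_compose2[OF f_cont cX] by (auto simp: fext_def)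
  next
    case False
    hence "fext n f j = (\<lambda>_. 0)" unfolding fext_def by auto
    then show ?thesis by simp
  qed
  have cW: "continuous_on {0..1} (Wj j)" if "j \<le> n" for j
  proof -
    have c1: "continuous_on {0..1} (\<lambda>t. V (j - 1) t * fext n f j (X t))"
      using that by (intro continuous_intros cV cfx) auto
    have c2: "continuous_on {0..1} (\<lambda>t. V (j + 1) t * fext n f (j + 1) (X t))"
    proof (cases "j + 1 \<le> n")
      case True thus ?thesis by (intro continuous_intros cV cfx) auto
    next
      case False
      hence "fext n f (j + 1) = (\<lambda>_. 0)" unfolding fext_def by auto
      thus ?thesis by simp
    qed
    show ?thesis unfolding Wj_def
      by (intro continuous_intros c1 c2 cDV cDX that)
  qed
  have cE: "continuous_on {0..1} E"
  proof -
    have "continuous_on {0..1} (\<lambda>t. (X t, V 0 t))" by (intro continuous_intros cX cV) auto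
    from continuous_on_compose2[OF eta_cont this] show ?thesis by (simp add: E_def[abs_def])
  qed
  have gnn: "0 \<le> (E t)\<^sup>2 * (DX t)\<^sup>2 + (\<Sum>j\<le>n. (Wj j t)\<^sup>2)" for t
    by (intro add_nonneg_nonneg mult_nonneg_nonneg sum_nonneg zero_le_power2)
  have cG: "continuous_on {0..1} G" unfolding G_def
    by (intro continuous_intros cE cDX cW gnn) auto
  have intG: "G integrable_on {0..1}" using cG by (rule integrable_continuous_interval)
  have Gnn: "\<And>t. 0 \<le> G t" by (simp add: G_def gnn)
  have L0: "0 \<le> L" unfolding L_def by (rule integral_nonneg'[OF Gnn])
  have L1': "L \<le> 1" using L1 L_eq L_def by simp
  have GW: "\<bar>Wj j t\<bar> \<le> G t" if "j \<le> n" for j t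
  proof -
    have "(Wj j t)\<^sup>2 \<le> (\<Sum>j\<le>n. (Wj j t)\<^sup>2)"
      using that by (intro member_le_sum) auto
    also have "\<dots> \<le> (E t)\<^sup>2 * (DX t)\<^sup>2 + (\<Sum>j\<le>n. (Wj j t)\<^sup>2)" by simp
    finally have "sqrt ((Wj j t)\<^sup>2) \<le> G t" unfolding G_def by (rule real_sqrt_le_mono)
    thus ?thesis by simp
  qed
  have GS: "sqrt (\<Sum>j\<le>n. (Wj j t)\<^sup>2) \<le> G t" for t
    unfolding G_def by (rule real_sqrt_le_mono) simp
  have GX: "E t * \<bar>DX t\<bar> \<le> G t" for t
  proof -
    have Ep: "E t > 0" unfolding E_def using eta_low[where x="X t" and u="V 0 t"] exp_gt_zero[of "- \<bar>V 0 t\<bar>"] by linarith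
    have "sqrt ((E t)\<^sup>2 * (DX t)\<^sup>2) \<le> G t" unfolding G_def by (rule real_sqrt_le_mono) (simp add: sum_nonneg)
    moreover have "sqrt ((E t)\<^sup>2 * (DX t)\<^sup>2) = E t * \<bar>DX t\<bar>" using Ep
      by (simp add: real_sqrt_mult)
    ultimately show ?thesis by simp
  qed
  define Nr where "Nr t = (\<Sum>j\<le>n. (V j t)\<^sup>2)" for t
  define h where "h t = sqrt (Nr t + 1)" for t
  have Nnn: "0 \<le> Nr t" for t unfolding Nr_def by (simp add: sum_nonneg)
  have dN: "(Nr has_real_derivative (\<Sum>j\<le>n. 2 * V j t * DV j t)) (at t)" if "t \<in> {0..1}" for t
    unfolding Nr_def[abs_def]
  proof (rule DERIV_sum)
    fix j assume "j \<in> {..n}"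
    hence "(V j has_real_derivative DV j t) (at t)" using dV that by simp
    from DERIV_power[OF this, of 2]
    show "((\<lambda>x. (V j x)\<^sup>2) has_real_derivative 2 * V j t * DV j t) (at t)" by (simp add: mult.commute mult.left_commute)
  qed
  have dh: "(h has_real_derivative (\<Sum>j\<le>n. 2 * V j t * DV j t) * (inverse (sqrt (Nr t + 1)) / 2)) (at t)"
    if "t \<in> {0..1}" for t
  proof -
    have g: "((\<lambda>x. Nr x + 1) has_real_derivative (\<Sum>j\<le>n. 2 * V j t * DV j t)) (at t)"
      using DERIV_add[OF dN[OF that] DERIV_const[of 1]] by simp
    have sq: "DERIV sqrt (Nr t + 1) :> inverse (sqrt (Nr t + 1)) / 2"
      using Nnn[of t] by (intro DERIV_real_sqrt) simp
    from DERIV_chain2[OF sq g] show ?thesis unfolding h_def[abs_def] by (simp add: mult.commute)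
  qed
  have hbound: "\<bar>(\<Sum>j\<le>n. 2 * V j t * DV j t) * (inverse (sqrt (Nr t + 1)) / 2)\<bar> \<le> 1 * G t" for t
  proof -
    have sk: "(\<Sum>j\<le>n. V j t * (V (j - 1) t * fext n f j (X t) - V (j + 1) t * fext n f (j + 1) (X t))) = 0"
      using skew[of "\<lambda>j. V j t" n f "X t"] by simp
    have "(\<Sum>j\<le>n. V j t * Wj j t) = (\<Sum>j\<le>n. V j t * DV j t) +
        DX t * (\<Sum>j\<le>n. V j t * (V (j - 1) t * fext n f j (X t) - V (j + 1) t * fext n f (j + 1) (X t)))"
    proof -
      have "(\<Sum>j\<le>n. V j t * Wj j t) = (\<Sum>j\<le>n. V j t * DV j t +
          DX t * (V j t * (V (j - 1) t * fext n f j (X t) - V (j + 1) t * fext n f (j + 1) (X t))))"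
        by (rule sum.cong) (simp_all add: Wj_def algebra_simps)
      also have "\<dots> = (\<Sum>j\<le>n. V j t * DV j t) +
          DX t * (\<Sum>j\<le>n. V j t * (V (j - 1) t * fext n f j (X t) - V (j + 1) t * fext n f (j + 1) (X t)))"
        by (simp add: sum.distrib sum_distrib_left)
      finally show ?thesis .
    qed
    hence eq: "(\<Sum>j\<le>n. V j t * DV j t) = (\<Sum>j\<le>n. V j t * Wj j t)" using sk by simp
    have cs: "(\<Sum>j\<le>n. V j t * Wj j t)\<^sup>2 \<le> Nr t * (\<Sum>j\<le>n. (Wj j t)\<^sup>2)"
      unfolding Nr_def by (rule Cauchy_Schwarz_ineq_sum)
    have "\<bar>\<Sum>j\<le>n. V j t * Wj j t\<bar> \<le> sqrt (Nr t * (\<Sum>j\<le>n. (Wj j t)\<^sup>2))"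
      using real_sqrt_le_mono[OF cs] by simp
    also have "\<dots> = sqrt (Nr t) * sqrt (\<Sum>j\<le>n. (Wj j t)\<^sup>2)" by (simp add: real_sqrt_mult)
    also have "\<dots> \<le> sqrt (Nr t + 1) * G t"
      by (rule mult_mono[OF _ GS]) (use Nnn[of t] in \<open>auto simp: sum_nonneg\<close>)
    finally have A: "\<bar>\<Sum>j\<le>n. V j t * DV j t\<bar> \<le> sqrt (Nr t + 1) * G t" using eq by simp
    have sp: "sqrt (Nr t + 1) > 0" using Nnn[of t] by simp
    define S where "S = (\<Sum>j\<le>n. V j t * DV j t)"
    define q where "q = sqrt (Nr t + 1)"
    have "(\<Sum>j\<le>n. 2 * V j t * DV j t) = 2 * S"
      unfolding S_def by (subst sum_distrib_left) (simp add: mult.assoc)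
    hence "(\<Sum>j\<le>n. 2 * V j t * DV j t) * (inverse (sqrt (Nr t + 1)) / 2) = S / q"
      by (simp only: q_def) (simp add: field_simps)
    moreover have "\<bar>S / q\<bar> \<le> G t"
    proof -
      have "\<bar>S / q\<bar> = \<bar>S\<bar> / q" using sp q_def by simp
      also have "\<dots> \<le> G t" using A sp unfolding S_def q_def by (simp add: divide_le_eq mult.commute)
      finally show ?thesis .
    qed
    ultimately show ?thesis by simp
  qed
  have hs: "\<bar>h s - h 0\<bar> \<le> 1 * L" if "s \<in> {0..1}" for s
    unfolding L_def by (rule int_bound[OF dh hbound intG Gnn _ that]) auto
  have R0: "R \<ge> 0" using X0 by simp
  have N0: "Nr 0 \<le> (real n + 1) * R\<^sup>2"
  proof -
    have "Nr 0 \<le> (\<Sum>j\<le>n. R\<^sup>2)" unfolding Nr_def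
      by (rule sum_mono) (use V0 R0 in \<open>auto simp: abs_le_square_iff[symmetric]\<close>)
    thus ?thesis by (simp add: add.commute)
  qed
  have hB: "h s \<le> B" if "s \<in> {0..1}" for s
  proof -
    have "h 0 \<le> sqrt ((real n + 1) * R\<^sup>2 + 1)" unfolding h_def using N0 by (simp add: real_sqrt_le_mono)
    thus ?thesis using hs[OF that] L1' B_def by linarith
  qed
  have Vb: "\<bar>V j t\<bar> \<le> B" if "j \<le> n" "t \<in> {0..1}" for j t
  proof -
    have "(V j t)\<^sup>2 \<le> Nr t + 1" unfolding Nr_def
      using member_le_sum[of j "{..n}" "\<lambda>j. (V j t)\<^sup>2"] that by auto
    hence "\<bar>V j t\<bar> \<le> h t" unfolding h_def using real_sqrt_le_mono by fastforce
    thus ?thesis using hB[OF that(2)] by simp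
  qed
  have B1: "B \<ge> 1" using B_def by simp
  have DXb: "\<bar>DX t\<bar> \<le> exp B * G t" if "t \<in> {0..1}" for t
  proof -
    have "exp (- B) \<le> E t"
    proof -
      have "\<bar>V 0 t\<bar> \<le> B" using Vb[of 0 t] that by simp
      hence "exp (- B) \<le> exp (- \<bar>V 0 t\<bar>)" by simp
      thus ?thesis using eta_low[where x="X t" and u="V 0 t"] unfolding E_def by linarith
    qed
    hence "exp (-B) * \<bar>DX t\<bar> \<le> E t * \<bar>DX t\<bar>" by (rule mult_right_mono) simp
    hence "exp (-B) * \<bar>DX t\<bar> \<le> G t" using GX[of t] by linarith
    hence "exp B * (exp (-B) * \<bar>DX t\<bar>) \<le> exp B * G t" by simp
    thus ?thesis by (simp add: exp_minus field_simps)
  qed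
  have Xs: "\<bar>X s - X 0\<bar> \<le> exp B * L" if "s \<in> {0..1}" for s
    unfolding L_def by (rule int_bound[OF dX DXb intG Gnn _ that]) auto
  show "\<bar>X 1 - X 0\<bar> \<le> exp B * curve_length n \<eta> f X V" using Xs[of 1] L_eq L_def by simp
  have Xb: "\<bar>X t\<bar> \<le> R + exp B" if "t \<in> {0..1}" for t
  proof -
    have "exp B * L \<le> exp B" using L1' by simp
    thus ?thesis using Xs[OF that] X0 by linarith
  qed
  fix j assume jn: "j \<le> n"
  have DVb: "\<bar>DV j t\<bar> \<le> (1 + 2 * B * M * exp B) * G t" if t: "t \<in> {0..1}" for t
  proof -
    have a1: "\<bar>V (j - 1) t * fext n f j (X t)\<bar> \<le> B * M"
      unfolding abs_mult by (rule mult_mono) (use Vb[of "j - 1" t] jn t M[OF Xb[OF t]] B1 in auto)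
    have a2: "\<bar>V (j + 1) t * fext n f (j + 1) (X t)\<bar> \<le> B * M"
    proof (cases "j + 1 \<le> n")
      case True
      show ?thesis unfolding abs_mult
        by (rule mult_mono) (use Vb[of "j + 1" t] True t M[OF Xb[OF t]] B1 in auto)
    next
      case False
      thus ?thesis using B1 M0 by (simp add: fext_def)
    qed
    have "DV j t = Wj j t - (V (j - 1) t * fext n f j (X t) - V (j + 1) t * fext n f (j + 1) (X t)) * DX t"
      by (simp add: Wj_def)
    hence "\<bar>DV j t\<bar> \<le> \<bar>Wj j t\<bar> + (B * M + B * M) * \<bar>DX t\<bar>"
    proof -
      assume e: "DV j t = Wj j t - (V (j - 1) t * fext n f j (X t) - V (j + 1) t * fext n f (j + 1) (X t)) * DX t"
      have "\<bar>(V (j - 1) t * fext n f j (X t) - V (j + 1) t * fext n f (j + 1) (X t)) * DX t\<bar>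
          \<le> (B * M + B * M) * \<bar>DX t\<bar>"
        unfolding abs_mult by (rule mult_right_mono) (use a1 a2 in auto)
      thus ?thesis unfolding e by linarith
    qed
    also have "\<dots> \<le> G t + (2 * B * M) * (exp B * G t)"
    proof (rule add_mono)
      show "\<bar>Wj j t\<bar> \<le> G t" using GW[OF jn, of t] .
      have "(B * M + B * M) = 2 * B * M" by simp
      moreover have "2 * B * M * \<bar>DX t\<bar> \<le> 2 * B * M * (exp B * G t)"
        by (rule mult_left_mono[OF DXb[OF t]]) (use B1 M0 in simp)
      ultimately show "(B * M + B * M) * \<bar>DX t\<bar> \<le> 2 * B * M * (exp B * G t)" by simp
    qed
    finally show ?thesis by (simp add: algebra_simps)
  qed
  have "0 \<le> 1 + 2 * B * M * exp B" using B1 M0 by simp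
  have Vs: "\<bar>V j s - V j 0\<bar> \<le> (1 + 2 * B * M * exp B) * L" if "s \<in> {0..1}" for s
    unfolding L_def by (rule int_bound[OF dV[OF jn] DVb intG Gnn _ that]) (use B1 M0 in auto)
  show "\<bar>V j 1 - V j 0\<bar> \<le> (1 + 2 * B * M * exp B) * curve_length n \<eta> f X V"
    using Vs[of 1] L_eq L_def by simp
qed




lemma conv_bound:
  fixes a b t R :: real
  assumes "\<bar>a\<bar> \<le> R" "\<bar>b\<bar> \<le> R" "t \<in> {0..1}"
  shows "\<bar>a + t * (b - a)\<bar> \<le> R"
proof -
  have "a + t * (b - a) = (1 - t) * a + t * b" by (simp add: algebra_simps)
  also have "\<bar>\<dots>\<bar> \<le> \<bar>(1 - t) * a\<bar> + \<bar>t * b\<bar>" by (rule abs_triangle_ineq)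
  also have "\<dots> = (1 - t) * \<bar>a\<bar> + t * \<bar>b\<bar>" using assms(3) by (simp add: abs_mult)
  also have "\<dots> \<le> (1 - t) * R + t * R"
    using assms by (intro add_mono mult_left_mono) auto
  also have "\<dots> = R" by (simp add: algebra_simps)
  finally show ?thesis .
qed

lemma line_C1:
  fixes a b :: real
  shows "(\<lambda>t. a + t * (b - a)) C1_differentiable_on {0..1}"
    and "vector_derivative (\<lambda>t. a + t * (b - a)) (at t) = b - a"
proof -
  have d: "((\<lambda>t. a + t * (b - a)) has_vector_derivative (b - a)) (at t)" for t
    unfolding has_real_derivative_iff_has_vector_derivative[symmetric]
    by (auto intro!: derivative_eq_intros)
  show "(\<lambda>t. a + t * (b - a)) C1_differentiable_on {0..1}"
    unfolding C1_differentiable_on_def using d by (intro exI[of _ "\<lambda>_. b - a"]) auto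
  show "vector_derivative (\<lambda>t. a + t * (b - a)) (at t) = b - a"
    using d by (rule vector_derivative_at)
qed

definition curveset where
  "curveset n \<eta> f p q = {curve_length n \<eta> f X V | X V. adm_curve n X V \<and>
      X 0 = fst p \<and> X 1 = fst q \<and> (\<forall>j\<le>n. V j 0 = snd p j \<and> V j 1 = snd q j)}"

lemma rdist_curveset: "rdist n \<eta> f p q = Inf (curveset n \<eta> f p q)"
  by (simp add: rdist_def curveset_def)

lemma gsq_nn: "0 \<le> gsq n \<eta> f x v dx dv"
  by (simp add: gsq_def sum_nonneg)

lemma curveset_nn: "x \<in> curveset n \<eta> f p q \<Longrightarrow> 0 \<le> x"
  unfolding curveset_def curve_length_def by (auto intro!: integral_nonneg' simp: gsq_nn)

lemma line_in:
  "curve_length n \<eta> f (\<lambda>t. fst p + t * (fst q - fst p)) (\<lambda>j t. snd p j + t * (snd q j - snd p j))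
     \<in> curveset n \<eta> f p q"
proof -
  have "adm_curve n (\<lambda>t. fst p + t * (fst q - fst p)) (\<lambda>j t. snd p j + t * (snd q j - snd p j))"
    unfolding adm_curve_def by (simp add: line_C1)
  thus ?thesis unfolding curveset_def by force
qed

lemma curveset_ne: "curveset n \<eta> f p q \<noteq> {}"
  using line_in by blast

lemma rdist_nn: "0 \<le> rdist n \<eta> f p q"
  unfolding rdist_curveset by (rule cInf_greatest[OF curveset_ne curveset_nn])

lemma rdist_le: "x \<in> curveset n \<eta> f p q \<Longrightarrow> rdist n \<eta> f p q \<le> x"
  unfolding rdist_curveset by (rule cInf_lower) (auto simp: bdd_below_def intro: curveset_nn)

lemma line_bound:
  fixes \<eta> :: "real \<Rightarrow> real \<Rightarrow> real"
  assumes eta_pos: "\<And>x u. \<eta> x u > 0"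
    and E: "\<And>x u. \<bar>x\<bar> \<le> R \<Longrightarrow> \<bar>u\<bar> \<le> R \<Longrightarrow> \<eta> x u \<le> E"
    and M0: "M \<ge> 0" and M: "\<And>j x. \<bar>x\<bar> \<le> R \<Longrightarrow> \<bar>fext n f j x\<bar> \<le> M"
    and R0: "R \<ge> 0"
    and p: "\<bar>fst p\<bar> \<le> R" "\<And>j. j \<le> n \<Longrightarrow> \<bar>snd p j\<bar> \<le> R"
    and q: "\<bar>fst q\<bar> \<le> R" "\<And>j. j \<le> n \<Longrightarrow> \<bar>snd q j\<bar> \<le> R"
  shows "rdist n \<eta> f p q \<le> (E + 1 + 2 * R * M * (real n + 1)) *
            (\<bar>fst q - fst p\<bar> + (\<Sum>j\<le>n. \<bar>snd q j - snd p j\<bar>))"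
proof -
  define X where "X = (\<lambda>t. fst p + t * (fst q - fst p))"
  define V where "V = (\<lambda>j t. snd p j + t * (snd q j - snd p j))"
  define D where "D = fst q - fst p"
  define dv where "dv j = snd q j - snd p j" for j
  define \<Delta> where "\<Delta> = \<bar>D\<bar> + (\<Sum>j\<le>n. \<bar>dv j\<bar>)"
  have E0: "E > 0" using E[of 0 0] eta_pos[of 0 0] R0 by simp
  have Dle: "\<bar>D\<bar> \<le> \<Delta>" and dvle: "(\<Sum>j\<le>n. \<bar>dv j\<bar>) \<le> \<Delta>" unfolding \<Delta>_def by (auto simp: sum_nonneg)
  have "rdist n \<eta> f p q \<le> curve_length n \<eta> f X V"
    by (rule rdist_le) (unfold X_def V_def, rule line_in)
  also have "\<dots> \<le> (E + 1 + 2 * R * M * (real n + 1)) * \<Delta>"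
    unfolding curve_length_def
  proof (rule integral_le_const)
    show "0 \<le> (E + 1 + 2 * R * M * (real n + 1)) * \<Delta>"
      using E0 M0 R0 by (simp add: \<Delta>_def sum_nonneg)
    fix t :: real assume t: "t \<in> {0..1}"
    have vdX: "vector_derivative X (at t) = D" unfolding X_def D_def by (rule line_C1)
    have vdV: "vector_derivative (V j) (at t) = dv j" for j unfolding V_def dv_def by (rule line_C1)
    have Xb: "\<bar>X t\<bar> \<le> R" unfolding X_def by (rule conv_bound[OF p(1) q(1) t])
    have Vb: "\<bar>V j t\<bar> \<le> R" if "j \<le> n" for j unfolding V_def by (rule conv_bound[OF p(2)[OF that] q(2)[OF that] t])
    define W where "W j = dv j + (V (j - 1) t * fext n f j (X t) - V (j + 1) t * fext n f (j + 1) (X t)) * D" for j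
    have geq: "gsq n \<eta> f (X t) (\<lambda>j. V j t) (vector_derivative X (at t)) (\<lambda>j. vector_derivative (V j) (at t))
        = (\<eta> (X t) (V 0 t) * D)\<^sup>2 + (\<Sum>j\<le>n. (W j)\<^sup>2)"
      unfolding gsq_def vdX vdV W_def by (simp add: power_mult_distrib)
    have Wb: "\<bar>W j\<bar> \<le> \<bar>dv j\<bar> + 2 * R * M * \<bar>D\<bar>" if jn: "j \<le> n" for j
    proof -
      have a1: "\<bar>V (j - 1) t * fext n f j (X t)\<bar> \<le> R * M"
        unfolding abs_mult by (rule mult_mono) (use Vb[of "j - 1"] jn M[OF Xb] R0 in auto)
      have a2: "\<bar>V (j + 1) t * fext n f (j + 1) (X t)\<bar> \<le> R * M"
      proof (cases "j + 1 \<le> n")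
        case True
        show ?thesis unfolding abs_mult
          by (rule mult_mono) (use Vb[of "j + 1"] True M[OF Xb] R0 in auto)
      next
        case False
        hence "fext n f (j + 1) = (\<lambda>_. 0)" unfolding fext_def by auto
        thus ?thesis using R0 M0 by simp
      qed
      have "\<bar>(V (j - 1) t * fext n f j (X t) - V (j + 1) t * fext n f (j + 1) (X t)) * D\<bar>
          \<le> (R * M + R * M) * \<bar>D\<bar>"
        unfolding abs_mult by (rule mult_right_mono)
          (use a1 a2 abs_triangle_ineq4[of "V (j - 1) t * fext n f j (X t)" "V (j + 1) t * fext n f (j + 1) (X t)"] in linarith, simp)
      moreover have "\<bar>W j\<bar> \<le> \<bar>dv j\<bar> + \<bar>(V (j - 1) t * fext n f j (X t) - V (j + 1) t * fext n f (j + 1) (X t)) * D\<bar>"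
        unfolding W_def by (rule abs_triangle_ineq)
      moreover have "(R * M + R * M) * \<bar>D\<bar> = 2 * R * M * \<bar>D\<bar>" by simp
      ultimately show ?thesis by linarith
    qed
    have "sqrt ((\<eta> (X t) (V 0 t) * D)\<^sup>2 + (\<Sum>j\<le>n. (W j)\<^sup>2))
        \<le> sqrt ((\<eta> (X t) (V 0 t) * D)\<^sup>2) + sqrt (\<Sum>j\<le>n. (W j)\<^sup>2)"
      by (rule sqrt_add_le_add_sqrt) (auto simp: sum_nonneg)
    also have "sqrt (\<Sum>j\<le>n. (W j)\<^sup>2) \<le> (\<Sum>j\<le>n. \<bar>W j\<bar>)"
      using L2_set_le_sum_abs[of W "{..n}"] by (simp add: L2_set_def)
    also have "(\<Sum>j\<le>n. \<bar>W j\<bar>) \<le> (\<Sum>j\<le>n. \<bar>dv j\<bar> + 2 * R * M * \<bar>D\<bar>)"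
      by (rule sum_mono) (use Wb in auto)
    also have "\<dots> = (\<Sum>j\<le>n. \<bar>dv j\<bar>) + (real n + 1) * (2 * R * M * \<bar>D\<bar>)"
      by (simp add: sum.distrib)
    also have "sqrt ((\<eta> (X t) (V 0 t) * D)\<^sup>2) \<le> E * \<bar>D\<bar>"
    proof -
      have "sqrt ((\<eta> (X t) (V 0 t) * D)\<^sup>2) = \<eta> (X t) (V 0 t) * \<bar>D\<bar>"
        using eta_pos[of "X t" "V 0 t"] by (simp add: abs_mult)
      also have "\<dots> \<le> E * \<bar>D\<bar>"
        by (rule mult_right_mono) (use E[OF Xb Vb[of 0]] in auto)
      finally show ?thesis .
    qed
    finally have "sqrt ((\<eta> (X t) (V 0 t) * D)\<^sup>2 + (\<Sum>j\<le>n. (W j)\<^sup>2))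
        \<le> E * \<bar>D\<bar> + ((\<Sum>j\<le>n. \<bar>dv j\<bar>) + (real n + 1) * (2 * R * M * \<bar>D\<bar>))" by simp
    also have "\<dots> \<le> E * \<Delta> + (\<Delta> + (real n + 1) * (2 * R * M * \<Delta>))"
    proof -
      have "E * \<bar>D\<bar> \<le> E * \<Delta>" using Dle E0 by simp
      moreover have "(real n + 1) * (2 * R * M * \<bar>D\<bar>) \<le> (real n + 1) * (2 * R * M * \<Delta>)"
        using Dle R0 M0 by (intro mult_left_mono) auto
      ultimately show ?thesis using dvle by linarith
    qed
    also have "\<dots> = (E + 1 + 2 * R * M * (real n + 1)) * \<Delta>" by (simp add: algebra_simps)
    finally show "sqrt (gsq n \<eta> f (X t) (\<lambda>j. V j t) (vector_derivative X (at t)) (\<lambda>j. vector_derivative (V j) (at t)))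
        \<le> (E + 1 + 2 * R * M * (real n + 1)) * \<Delta>" unfolding geq .
  qed
  finally show ?thesis unfolding \<Delta>_def D_def dv_def .
qed




lemma smooth1_cont: "smooth1 g \<Longrightarrow> continuous_on UNIV g"
proof -
  assume "smooth1 g"
  hence "((deriv ^^ 0) g) differentiable (at x)" for x unfolding smooth1_def by blast
  hence "g differentiable (at x)" for x by simp
  hence "isCont g x" for x using differentiable_imp_continuous_within by blast
  thus ?thesis by (simp add: continuous_at_imp_continuous_on)
qed

lemma fext_bound:
  assumes f_cont: "\<And>j. 1 \<le> j \<Longrightarrow> j \<le> n \<Longrightarrow> continuous_on UNIV (f j)"
  shows "\<exists>M\<ge>0. \<forall>j x. \<bar>x\<bar> \<le> R \<longrightarrow> \<bar>fext n f j x\<bar> \<le> M"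
proof -
  have "\<forall>j\<in>{1..n}. \<exists>b. \<forall>x. \<bar>x\<bar> \<le> R \<longrightarrow> \<bar>f j x\<bar> \<le> b"
  proof
    fix j assume j: "j \<in> {1..n}"
    have cj: "continuous_on UNIV (f j)" using j f_cont by simp
    have "compact (f j ` {-R..R})"
      by (rule compact_continuous_image[OF continuous_on_subset[OF cj subset_UNIV] compact_Icc])
    hence "bounded (f j ` {-R..R})" by (rule compact_imp_bounded)
    then obtain b where b: "\<forall>y\<in>f j ` {-R..R}. norm y \<le> b" by (auto simp: Elementary_Metric_Spaces.bounded_iff)
    show "\<exists>b. \<forall>x. \<bar>x\<bar> \<le> R \<longrightarrow> \<bar>f j x\<bar> \<le> b"
    proof (intro exI allI impI)
      fix x :: real assume "\<bar>x\<bar> \<le> R"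
      hence "x \<in> {-R..R}" by (simp add: abs_le_iff)
      hence "f j x \<in> f j ` {-R..R}" by (rule imageI)
      hence "norm (f j x) \<le> b" using b by blast
      thus "\<bar>f j x\<bar> \<le> b" by simp
    qed
  qed
  from bchoice[OF this] obtain bf where bf0: "\<forall>j\<in>{1..n}. \<forall>x. \<bar>x\<bar> \<le> R \<longrightarrow> \<bar>f j x\<bar> \<le> bf j"
    by blast
  have bf: "\<And>j x. j \<in> {1..n} \<Longrightarrow> \<bar>x\<bar> \<le> R \<Longrightarrow> \<bar>f j x\<bar> \<le> bf j" using bf0 by blast
  define M where "M = (\<Sum>j\<in>{1..n}. \<bar>bf j\<bar>)"
  have M0: "M \<ge> 0" unfolding M_def by (simp add: sum_nonneg)
  have "\<bar>fext n f j x\<bar> \<le> M" if "\<bar>x\<bar> \<le> R" for j x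
  proof (cases "j \<in> {1..n}")
    case True
    have "\<bar>f j x\<bar> \<le> \<bar>bf j\<bar>" using bf[OF True that] by simp
    also have "\<dots> \<le> M" unfolding M_def by (rule member_le_sum) (use True in auto)
    finally show ?thesis using True by (simp add: fext_def)
  next
    case False
    hence "fext n f j = (\<lambda>_. 0)" unfolding fext_def by auto
    thus ?thesis using M0 by simp
  qed
  thus ?thesis using M0 by blast
qed

lemma eta_bound:
  fixes \<eta> :: "real \<Rightarrow> real \<Rightarrow> real"
  assumes "continuous_on UNIV (\<lambda>p. \<eta> (fst p) (snd p))"
  shows "\<exists>E. \<forall>x u. \<bar>x\<bar> \<le> R \<longrightarrow> \<bar>u\<bar> \<le> R \<longrightarrow> \<eta> x u \<le> E"
proof -
  have "compact ((\<lambda>p. \<eta> (fst p) (snd p)) ` ({-R..R} \<times> {-R..R}))"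
    by (rule compact_continuous_image[OF continuous_on_subset[OF assms subset_UNIV] compact_Times[OF compact_Icc compact_Icc]])
  hence "bounded ((\<lambda>p. \<eta> (fst p) (snd p)) ` ({-R..R} \<times> {-R..R}))" by (rule compact_imp_bounded)
  then obtain b where b: "\<forall>y\<in>(\<lambda>p. \<eta> (fst p) (snd p)) ` ({-R..R} \<times> {-R..R}). norm y \<le> b"
    by (auto simp: Elementary_Metric_Spaces.bounded_iff)
  have "\<eta> x u \<le> b" if "\<bar>x\<bar> \<le> R" "\<bar>u\<bar> \<le> R" for x u
  proof -
    have "x \<in> {-R..R}" "u \<in> {-R..R}" using that by (auto simp: abs_le_iff)
    hence "norm (\<eta> x u) \<le> b" using b by auto
    thus ?thesis by simp
  qed
  thus ?thesis by blast
qed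

lemma disp:
  fixes \<eta> :: "real \<Rightarrow> real \<Rightarrow> real"
  assumes eta_low: "\<And>x u. \<eta> x u \<ge> exp (- \<bar>u\<bar>)"
    and eta_cont: "continuous_on UNIV (\<lambda>p. \<eta> (fst p) (snd p))"
    and f_cont: "\<And>j. 1 \<le> j \<Longrightarrow> j \<le> n \<Longrightarrow> continuous_on UNIV (f j)"
  shows "\<exists>C\<ge>0. \<forall>p q e. \<bar>fst p\<bar> \<le> R \<longrightarrow> (\<forall>j\<le>n. \<bar>snd p j\<bar> \<le> R) \<longrightarrow> rdist n \<eta> f p q < e \<longrightarrow> e \<le> 1 \<longrightarrow>
      \<bar>fst q - fst p\<bar> \<le> C * e \<and> (\<forall>j\<le>n. \<bar>snd q j - snd p j\<bar> \<le> C * e)"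
proof -
  define B where "B = sqrt ((real n + 1) * R\<^sup>2 + 1) + 1"
  from fext_bound[OF f_cont, where R="R + exp B"] obtain M where
    MM: "M \<ge> 0 \<and> (\<forall>j x. \<bar>x\<bar> \<le> R + exp B \<longrightarrow> \<bar>fext n f j x\<bar> \<le> M)" ..
  have M0: "M \<ge> 0" using MM by (rule conjunct1)
  have M: "\<bar>fext n f j x\<bar> \<le> M" if "\<bar>x\<bar> \<le> R + exp B" for j x
    using MM that by simp
  have "0 \<le> sqrt ((real n + 1) * R\<^sup>2 + 1)"
    by (intro real_sqrt_ge_zero add_nonneg_nonneg mult_nonneg_nonneg) auto
  hence B1: "B \<ge> 1" unfolding B_def by simp
  define C where "C = exp B + (1 + 2 * B * M * exp B)"
  have BM: "0 \<le> 2 * B * M * exp B" using B1 M0 by simp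
  have C0: "C \<ge> 0" unfolding C_def using BM by (smt (verit) exp_gt_zero)
  have main: "\<bar>fst q - fst p\<bar> \<le> C * e \<and> (\<forall>j\<le>n. \<bar>snd q j - snd p j\<bar> \<le> C * e)"
    if p: "\<bar>fst p\<bar> \<le> R" "\<forall>j\<le>n. \<bar>snd p j\<bar> \<le> R" and r: "rdist n \<eta> f p q < e" and e1: "e \<le> 1" for p q e
  proof -
    obtain l where l: "l \<in> curveset n \<eta> f p q" "l < e"
      using cInf_lessD[OF curveset_ne r[unfolded rdist_curveset]] by blast
    have l0: "0 \<le> l" using curveset_nn[OF l(1)] .
    from l(1) obtain X V where adm: "adm_curve n X V" and ends: "X 0 = fst p" "X 1 = fst q"
      "\<forall>j\<le>n. V j 0 = snd p j \<and> V j 1 = snd q j" and leq: "l = curve_length n \<eta> f X V"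
      unfolding curveset_def by blast
    have X0: "\<bar>X 0\<bar> \<le> R" using ends p by simp
    have V0: "\<And>j. j \<le> n \<Longrightarrow> \<bar>V j 0\<bar> \<le> R" using ends p by simp
    have L1: "curve_length n \<eta> f X V \<le> 1" using leq l e1 by simp
    note cb = curve_bound[OF eta_low eta_cont f_cont adm X0 V0 L1 B_def M0 M]
    have "\<bar>fst q - fst p\<bar> \<le> exp B * l" using cb(1) ends leq by simp
    also have "\<dots> \<le> exp B * e" using l by simp
    also have "\<dots> \<le> C * e" unfolding C_def using l0 l B1 M0 by (intro mult_right_mono) auto
    finally have 1: "\<bar>fst q - fst p\<bar> \<le> C * e" .
    have "\<bar>snd q j - snd p j\<bar> \<le> C * e" if j: "j \<le> n" for j
    proof -
      have v: "\<bar>V j 1 - V j 0\<bar> \<le> (1 + 2 * B * M * exp B) * curve_length n \<eta> f X V"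
        using cb(2) j by blast
      have e01: "V j 1 = snd q j" "V j 0 = snd p j" using ends j by auto
      have "\<bar>snd q j - snd p j\<bar> \<le> (1 + 2 * B * M * exp B) * l" using v leq unfolding e01 by simp
      also have "\<dots> \<le> (1 + 2 * B * M * exp B) * e" using l B1 M0 by (intro mult_left_mono) auto
      also have "\<dots> \<le> C * e" unfolding C_def using l0 l by (intro mult_right_mono) auto
      finally show ?thesis .
    qed
    with 1 show ?thesis by blast
  qed
  show ?thesis
    apply (rule exI[of _ C])
    apply (rule conjI[OF C0])
    apply (intro allI impI)
    apply (erule (3) main)
    done
qed




theorem corollary3p5:
  fixes n :: nat and f :: "nat \<Rightarrow> real \<Rightarrow> real" and \<eta> :: "real \<Rightarrow> real \<Rightarrow> real"
  assumes f_smooth: "\<And>j. 1 \<le> j \<Longrightarrow> j \<le> n \<Longrightarrow> smooth1 (f j)"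
    and eta_smooth: "smooth2 \<eta>"
    and eta_pos: "\<And>x u. \<eta> x u > 0"
    and eta_axis: "\<And>x. \<eta> x 0 = 1"
    and scal_le: "\<And>x u. scal \<eta> x u \<le> -2"
    and curv: "\<And>x. \<bar>pdu \<eta> x 0\<bar> \<le> 1"
  shows "metric_complete n \<eta> f"
proof -
  have eta_low: "\<And>x u. \<eta> x u \<ge> exp (- \<bar>u\<bar>)"
    using eta_lower[OF eta_smooth eta_pos eta_axis scal_le curv] .
  have eta_cont: "continuous_on UNIV (\<lambda>p. \<eta> (fst p) (snd p))"
  proof -
    have "continuous_on UNIV (\<lambda>p. iter_pd [] \<eta> (fst p) (snd p))"
      using eta_smooth unfolding smooth2_def by blast
    thus ?thesis by (simp add: iter_pd_def)
  qed
  have f_cont: "\<And>j. 1 \<le> j \<Longrightarrow> j \<le> n \<Longrightarrow> continuous_on UNIV (f j)"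
    using f_smooth smooth1_cont by blast
  let ?rd = "rdist n \<eta> f"
  show ?thesis unfolding metric_complete_def
  proof (intro allI impI)
    fix P :: "nat \<Rightarrow> real \<times> (nat \<Rightarrow> real)"
    assume cau: "\<forall>e>0. \<exists>N. \<forall>m\<ge>N. \<forall>k\<ge>N. ?rd (P m) (P k) < e"
    from cau[rule_format, of 1] obtain N0 where N0: "\<And>m k. m \<ge> N0 \<Longrightarrow> k \<ge> N0 \<Longrightarrow> ?rd (P m) (P k) < 1"
      by auto
    define R0 where "R0 = \<bar>fst (P N0)\<bar> + (\<Sum>j\<le>n. \<bar>snd (P N0) j\<bar>)"
    have R0a: "\<bar>fst (P N0)\<bar> \<le> R0" unfolding R0_def by (simp add: sum_nonneg)
    have R0b: "\<forall>j\<le>n. \<bar>snd (P N0) j\<bar> \<le> R0"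
    proof (intro allI impI)
      fix j assume "j \<le> n"
      hence "\<bar>snd (P N0) j\<bar> \<le> (\<Sum>j\<le>n. \<bar>snd (P N0) j\<bar>)"
        by (intro member_le_sum) auto
      thus "\<bar>snd (P N0) j\<bar> \<le> R0" unfolding R0_def by simp
    qed
    from disp[OF eta_low eta_cont f_cont, where R=R0] obtain C0 where
      C0: "C0 \<ge> 0 \<and> (\<forall>p q e. \<bar>fst p\<bar> \<le> R0 \<longrightarrow> (\<forall>j\<le>n. \<bar>snd p j\<bar> \<le> R0) \<longrightarrow> ?rd p q < e \<longrightarrow> e \<le> 1 \<longrightarrow>
      \<bar>fst q - fst p\<bar> \<le> C0 * e \<and> (\<forall>j\<le>n. \<bar>snd q j - snd p j\<bar> \<le> C0 * e))" ..
    define R1 where "R1 = R0 + C0"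
    have inK: "\<bar>fst (P k)\<bar> \<le> R1 \<and> (\<forall>j\<le>n. \<bar>snd (P k) j\<bar> \<le> R1)" if k: "k \<ge> N0" for k
    proof -
      have r: "?rd (P N0) (P k) < 1" using N0[OF order_refl k] .
      have b: "\<bar>fst (P k) - fst (P N0)\<bar> \<le> C0 * 1 \<and> (\<forall>j\<le>n. \<bar>snd (P k) j - snd (P N0) j\<bar> \<le> C0 * 1)"
        using C0[THEN conjunct2, rule_format, of "P N0" "P k" 1] R0a R0b r by simp
      show ?thesis
      proof (intro conjI allI impI)
        show "\<bar>fst (P k)\<bar> \<le> R1" using b R0a unfolding R1_def by linarith
        fix j assume "j \<le> n"
        thus "\<bar>snd (P k) j\<bar> \<le> R1" using b R0b unfolding R1_def by force
      qed
    qed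
    from disp[OF eta_low eta_cont f_cont, where R=R1] obtain C1 where
      C1: "C1 \<ge> 0 \<and> (\<forall>p q e. \<bar>fst p\<bar> \<le> R1 \<longrightarrow> (\<forall>j\<le>n. \<bar>snd p j\<bar> \<le> R1) \<longrightarrow> ?rd p q < e \<longrightarrow> e \<le> 1 \<longrightarrow>
      \<bar>fst q - fst p\<bar> \<le> C1 * e \<and> (\<forall>j\<le>n. \<bar>snd q j - snd p j\<bar> \<le> C1 * e))" ..
    have C1p: "C1 \<ge> 0" using C1 by simp
    have key: "\<exists>N. \<forall>m\<ge>N. \<forall>k\<ge>N. \<bar>fst (P k) - fst (P m)\<bar> < e \<and> (\<forall>j\<le>n. \<bar>snd (P k) j - snd (P m) j\<bar> < e)"
      if e: "e > 0" for e
    proof -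
      define e' where "e' = min 1 (e / (C1 + 1))"
      have e'0: "e' > 0" unfolding e'_def using e C1p by simp
      have e'1: "e' \<le> 1" unfolding e'_def by simp
      have Ce: "C1 * e' < e"
      proof -
        have "C1 * e' \<le> C1 * (e / (C1 + 1))" unfolding e'_def using C1p by (intro mult_left_mono) auto
        also have "\<dots> < e" using e C1p by (simp add: field_simps)
        finally show ?thesis .
      qed
      from cau[rule_format, OF e'0] obtain N1 where N1: "\<forall>m\<ge>N1. \<forall>k\<ge>N1. ?rd (P m) (P k) < e'" by blast
      show ?thesis
      proof (intro exI[of _ "max N0 N1"] allI impI)
        fix m k assume m: "max N0 N1 \<le> m" and k: "max N0 N1 \<le> k"
        have r: "?rd (P m) (P k) < e'" using N1 m k by simp
        have pm: "\<bar>fst (P m)\<bar> \<le> R1" "\<forall>j\<le>n. \<bar>snd (P m) j\<bar> \<le> R1" using inK[of m] m by auto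
        have b: "\<bar>fst (P k) - fst (P m)\<bar> \<le> C1 * e' \<and> (\<forall>j\<le>n. \<bar>snd (P k) j - snd (P m) j\<bar> \<le> C1 * e')"
          using C1[THEN conjunct2, rule_format, of "P m" "P k" e'] pm r e'1 by simp
        show "\<bar>fst (P k) - fst (P m)\<bar> < e \<and> (\<forall>j\<le>n. \<bar>snd (P k) j - snd (P m) j\<bar> < e)"
          using b Ce by force
      qed
    qed
    have cx: "Cauchy (\<lambda>k. fst (P k))"
    proof (rule metric_CauchyI)
      fix e :: real assume "e > 0"
      from key[OF this] obtain N where "\<forall>m\<ge>N. \<forall>k\<ge>N. \<bar>fst (P k) - fst (P m)\<bar> < e" by blast
      thus "\<exists>M. \<forall>m\<ge>M. \<forall>k\<ge>M. dist (fst (P m)) (fst (P k)) < e"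
        by (auto simp: dist_real_def abs_minus_commute)
    qed
    have cv: "Cauchy (\<lambda>k. snd (P k) j)" if j: "j \<le> n" for j
    proof (rule metric_CauchyI)
      fix e :: real assume "e > 0"
      from key[OF this] obtain N where "\<forall>m\<ge>N. \<forall>k\<ge>N. \<bar>snd (P k) j - snd (P m) j\<bar> < e" using j by blast
      thus "\<exists>M. \<forall>m\<ge>M. \<forall>k\<ge>M. dist (snd (P m) j) (snd (P k) j) < e"
        by (auto simp: dist_real_def abs_minus_commute)
    qed
    define xs where "xs = lim (\<lambda>k. fst (P k))"
    define vs where "vs j = lim (\<lambda>k. snd (P k) j)" for j
    have Lx: "(\<lambda>k. fst (P k)) \<longlonglongrightarrow> xs" unfolding xs_def
      using cx by (simp add: Cauchy_convergent_iff convergent_LIMSEQ_iff)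
    have Lv: "(\<lambda>k. snd (P k) j) \<longlonglongrightarrow> vs j" if "j \<in> {..n}" for j unfolding vs_def
      using cv[of j] that by (simp add: Cauchy_convergent_iff convergent_LIMSEQ_iff)
    define q where "q = (xs, vs)"
    have qx: "\<bar>fst q\<bar> \<le> R1"
    proof -
      have "(\<lambda>k. \<bar>fst (P k)\<bar>) \<longlonglongrightarrow> \<bar>xs\<bar>" by (rule tendsto_rabs[OF Lx])
      moreover have "\<exists>N. \<forall>k\<ge>N. \<bar>fst (P k)\<bar> \<le> R1" using inK by blast
      ultimately show ?thesis unfolding q_def by (simp add: LIMSEQ_le_const2)
    qed
    have qv: "\<bar>snd q j\<bar> \<le> R1" if j: "j \<le> n" for j
    proof -
      have "(\<lambda>k. \<bar>snd (P k) j\<bar>) \<longlonglongrightarrow> \<bar>vs j\<bar>" by (rule tendsto_rabs[OF Lv]) (use j in simp)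
      moreover have "\<exists>N. \<forall>k\<ge>N. \<bar>snd (P k) j\<bar> \<le> R1" using inK j by blast
      ultimately show ?thesis unfolding q_def by (simp add: LIMSEQ_le_const2)
    qed
    have R1p: "R1 \<ge> 0" using qx by simp
    from eta_bound[OF eta_cont, where R=R1] obtain E where
      E: "\<forall>x u. \<bar>x\<bar> \<le> R1 \<longrightarrow> \<bar>u\<bar> \<le> R1 \<longrightarrow> \<eta> x u \<le> E" ..
    from fext_bound[OF f_cont, where R=R1] obtain M where
      MM: "M \<ge> 0 \<and> (\<forall>j x. \<bar>x\<bar> \<le> R1 \<longrightarrow> \<bar>fext n f j x\<bar> \<le> M)" ..
    define K where "K = E + 1 + 2 * R1 * M * (real n + 1)"
    have upper: "?rd (P k) q \<le> K * (\<bar>fst q - fst (P k)\<bar> + (\<Sum>j\<le>n. \<bar>snd q j - snd (P k) j\<bar>))"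
      if k: "k \<ge> N0" for k
      unfolding K_def
    proof (rule line_bound[OF eta_pos])
      show "\<And>x u. \<bar>x\<bar> \<le> R1 \<Longrightarrow> \<bar>u\<bar> \<le> R1 \<Longrightarrow> \<eta> x u \<le> E" using E by blast
      show "M \<ge> 0" using MM by simp
      show "\<And>j x. \<bar>x\<bar> \<le> R1 \<Longrightarrow> \<bar>fext n f j x\<bar> \<le> M" using MM by blast
      show "R1 \<ge> 0" by fact
      show "\<bar>fst (P k)\<bar> \<le> R1" "\<And>j. j \<le> n \<Longrightarrow> \<bar>snd (P k) j\<bar> \<le> R1" using inK[OF k] by auto
      show "\<bar>fst q\<bar> \<le> R1" by fact
      show "\<And>j. j \<le> n \<Longrightarrow> \<bar>snd q j\<bar> \<le> R1" by (rule qv)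
    qed
    have lim0: "(\<lambda>k. K * (\<bar>fst q - fst (P k)\<bar> + (\<Sum>j\<le>n. \<bar>snd q j - snd (P k) j\<bar>))) \<longlonglongrightarrow> 0"
    proof -
      have "(\<lambda>k. K * (\<bar>fst q - fst (P k)\<bar> + (\<Sum>j\<le>n. \<bar>snd q j - snd (P k) j\<bar>)))
          \<longlonglongrightarrow> K * (\<bar>xs - xs\<bar> + (\<Sum>j\<le>n. \<bar>vs j - vs j\<bar>))"
        unfolding q_def fst_conv snd_conv
        by (intro tendsto_intros Lx Lv)
      thus ?thesis by simp
    qed
    show "\<exists>q. (\<lambda>k. ?rd (P k) q) \<longlonglongrightarrow> 0"
    proof (intro exI[of _ q])
      show "(\<lambda>k. ?rd (P k) q) \<longlonglongrightarrow> 0"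
      proof (rule tendsto_sandwich[OF _ _ tendsto_const lim0])
        show "\<forall>\<^sub>F k in sequentially. 0 \<le> ?rd (P k) q" by (simp add: rdist_nn)
        show "\<forall>\<^sub>F k in sequentially. ?rd (P k) q \<le> K * (\<bar>fst q - fst (P k)\<bar> + (\<Sum>j\<le>n. \<bar>snd q j - snd (P k) j\<bar>))"
          using upper by (auto simp: eventually_sequentially)
      qed
    qed
  qed
qed


end
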